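(* Let $q\in\mathbf{k}$ be invertible. The Koszul dual operad of the operad of differential $q$-tridendriform algebras of weight zero is the operad of $\frac1q$-triassociative algebras $(T,\dashv,\vdash,\perp)$ equipped with one linear operator $\partial:T\to T$ lying in the centroid and satisfying $\partial^2=0$, i.e. $\partial(a\ast b)=\partial(a)\ast b=a\ast\partial(b)$ for all $a,b\in T$ and $\ast\in\{\dashv,\vdash,\perp\}$, and $\partial\circ\partial=0$.
   Context: $\mathbf{k}$ is a commutative unital ring (a field for Koszul duality). For $q\in\mathbf{k}$, the operad of differential $q$-tridendriform algebras of weight zero is the (nonsymmetric, quadratic) operad generated by three binary operations $\prec,\succ,\bullet$ and one unary operation $d$, subject to the $q$-tridendriform relations (with $\star_q:=\prec+\succ+q\bullet$): $(a\prec b)\prec c=a\prec(b\star_q c)$, $(a\succ b)\prec c=a\succ(b\prec c)$, $(a\star_q b)\succ c=a\succ(b\succ c)$, $(a\succ b)\bullet c=a\succ(b\bullet c)$, $(a\prec b)\bullet c=a\bullet(b\succ c)$, $(a\bullet b)\prec c=a\bullet(b\prec c)$, $(a\bullet b)\bullet c=a\bullet(b\bullet c)$, and the Leibniz relations $d(a\ast b)=d(a)\ast b+a\ast d(b)$ for $\ast\in\{\prec,\succ,\bullet\}$. Koszul duality of operads is in the sense of Ginzburg–Kapranov/Loday–Vallette. For $p\in\mathbf{k}$, a $p$-triassociative algebra is a $\mathbf{k}$-module $T$ with bilinear operations $\dashv,\vdash,\perp$ such that for all $a,b,c$: $(a\dashv b)\dashv c=a\dashv(b\dashv c)$, $(a\dashv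 b)\dashv c=a\dashv(b\vdash c)$, $(a\vdash b)\dashv c=a\vdash(b\dashv c)$, $(a\dashv b)\vdash c=a\vdash(b\vdash c)$, $(a\vdash b)\vdash c=a\vdash(b\vdash c)$, $(a\perp b)\perp c=a\perp(b\perp c)$, $(a\dashv b)\dashv c=p\,a\dashv(b\perp c)$, $(a\perp b)\dashv c=a\perp(b\dashv c)$, $(a\dashv b)\perp c=a\perp(b\vdash c)$, $(a\vdash b)\perp c=a\vdash(b\perp c)$, $p\,(a\perp b)\vdash c=a\vdash(b\vdash c)$. *)

theory Defs
  imports Main
begin

text \<open>
  For the differential q-tridendriform
  operad: Prec = prec, Succ = succ, Bul = bullet, and the unary generator is d.
  For the dual operad (generators = dual basis): Prec = dashv, Succ = vdash,
  Bul = perp, and the unary generator is the operator partial.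
\<close>

datatype bop = Prec | Succ | Bul

text \<open>Basis of the weight-2 part of the free nonsymmetric operad on these generators
  (tree monomials with two vertices):
  C1 m n = m o_1 n, i.e. (a n b) m c;   C2 m n = m o_2 n, i.e. a m (b n c);
  DTop m = d o m, i.e. d(a m b);  DL m = m o_1 d, i.e. (d a) m b;
  DR m = m o_2 d, i.e. a m (d b);  DD = d o d, i.e. d(d a).\<close>

datatype tree2 = C1 bop bop | C2 bop bop | DTop bop | DL bop | DR bop | DD

definition all_bops :: "bop list" where
  "all_bops = [Prec, Succ, Bul]"

definition all_tree2 :: "tree2 list" where
  "all_tree2 =
     [C1 m n. m \<leftarrow> all_bops, n \<leftarrow> all_bops] @ [C2 m n. m \<leftarrow> all_bops, n \<leftarrow> all_bops]
     @ map DTop all_bops @ map DL all_bops @ map DR all_bops @ [DD]"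

type_synonym 'k w2 = "tree2 \<Rightarrow> 'k"

definition vec :: "(tree2 \<times> 'k::comm_ring_1) list \<Rightarrow> 'k w2" where
  "vec xs t = sum_list (map snd (filter (\<lambda>p. fst p = t) xs))"

text \<open>Sign of the Koszul pairing on tree monomials (Loday--Vallette convention for
  nonsymmetric operads: + on partial composition o_1 of binary operations, - on o_2;
  for the unary generator: + on d o m and d o d, - on m o_i d).\<close>
definition eps :: "tree2 \<Rightarrow> 'k::comm_ring_1" where
  "eps t = (case t of C1 _ _ \<Rightarrow> 1 | C2 _ _ \<Rightarrow> -1 | DTop _ \<Rightarrow> 1 | DL _ \<Rightarrow> -1
                 | DR _ \<Rightarrow> -1 | DD \<Rightarrow> 1)"

definition pairing :: "'k::comm_ring_1 w2 \<Rightarrow> 'k w2 \<Rightarrow> 'k" where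
  "pairing v w = (\<Sum>t\<in>set all_tree2. eps t * v t * w t)"

definition lspan :: "'k::comm_ring_1 w2 list \<Rightarrow> 'k w2 set" where
  "lspan vs = {w. \<exists>c. w = (\<lambda>t. \<Sum>i<length vs. c i * (vs ! i) t)}"

text \<open>Koszul dual relations: P(E,R)^! = P(E^\<or>, R^\<bottom>).\<close>
definition koszul_dual_rel :: "'k::comm_ring_1 w2 set \<Rightarrow> 'k w2 set" where
  "koszul_dual_rel R = {w. \<forall>v\<in>R. pairing v w = 0}"

text \<open>Relations (as LHS - RHS) of differential q-tridendriform algebras of weight zero.\<close>
definition diff_tridend_rels :: "'k::comm_ring_1 \<Rightarrow> 'k w2 list" where
  "diff_tridend_rels q =
    [ vec [(C1 Prec Prec, 1), (C2 Prec Prec, -1), (C2 Prec Succ, -1), (C2 Prec Bul, -q)],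
      vec [(C1 Prec Succ, 1), (C2 Succ Prec, -1)],
      vec [(C1 Succ Prec, 1), (C1 Succ Succ, 1), (C1 Succ Bul, q), (C2 Succ Succ, -1)],
      vec [(C1 Bul Succ, 1), (C2 Succ Bul, -1)],
      vec [(C1 Bul Prec, 1), (C2 Bul Succ, -1)],
      vec [(C1 Prec Bul, 1), (C2 Bul Prec, -1)],
      vec [(C1 Bul Bul, 1), (C2 Bul Bul, -1)] ]
    @ map (\<lambda>m. vec [(DTop m, 1), (DL m, -1), (DR m, -1)]) all_bops"

definition triass_centroid_rels :: "'k::comm_ring_1 \<Rightarrow> 'k w2 list" where
  "triass_centroid_rels p =
    [ vec [(C1 Prec Prec, 1), (C2 Prec Prec, -1)],
      vec [(C1 Prec Prec, 1), (C2 Prec Succ, -1)],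
      vec [(C1 Prec Succ, 1), (C2 Succ Prec, -1)],
      vec [(C1 Succ Prec, 1), (C2 Succ Succ, -1)],
      vec [(C1 Succ Succ, 1), (C2 Succ Succ, -1)],
      vec [(C1 Bul Bul, 1), (C2 Bul Bul, -1)],
      vec [(C1 Prec Prec, 1), (C2 Prec Bul, -p)],
      vec [(C1 Prec Bul, 1), (C2 Bul Prec, -1)],
      vec [(C1 Bul Prec, 1), (C2 Bul Succ, -1)],
      vec [(C1 Bul Succ, 1), (C2 Succ Bul, -1)],
      vec [(C1 Succ Bul, p), (C2 Succ Succ, -1)] ]
    @ map (\<lambda>m. vec [(DTop m, 1), (DL m, -1)]) all_bops
    @ map (\<lambda>m. vec [(DTop m, 1), (DR m, -1)]) all_bops
    @ [vec [(DD, 1)]]"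

end

theory Submission
  imports Defs
begin

lemma len: "length (triass_centroid_rels p) = 18" "length (diff_tridend_rels q) = 10"
  by (simp_all add: triass_centroid_rels_def diff_tridend_rels_def all_bops_def)

lemma pd: "pairing v w = (\<Sum>t\<leftarrow>all_tree2. eps t * v t * w t)"
  unfolding pairing_def
  by (rule sum.distinct_set_conv_list) (simp add: all_tree2_def all_bops_def)

lemma pairing_lin:
  "pairing (\<lambda>t. \<Sum>i<n. c i * vs i t) w = (\<Sum>i<n. c i * pairing (vs i) w)"
  unfolding pairing_def
  by (simp add: sum_distrib_left sum_distrib_right mult.assoc mult.left_commute sum.swap[of _ "{..<n}"])

lemma mem_lspan: "j < length vs \<Longrightarrow> vs ! j \<in> lspan vs"
proof -
  assume j: "j < length vs"
  have "vs ! j = (\<lambda>t. \<Sum>i<length vs. (if i = j then 1 else 0) * (vs ! i) t)"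
  proof
    fix t
    have "(\<Sum>i<length vs. (if i = j then 1 else 0) * (vs ! i) t) = (\<Sum>i<length vs. (if i = j then (vs ! i) t else 0))"
      by (rule sum.cong) auto
    also have "\<dots> = (vs ! j) t" using j by (simp add: sum.delta)
    finally show "(vs ! j) t = (\<Sum>i<length vs. (if i = j then 1 else 0) * (vs ! i) t)" by simp
  qed
  then show ?thesis unfolding lspan_def
    by - (rule CollectI, rule exI[of _ "\<lambda>i. if i = j then 1 else 0"], assumption)
qed

lemma orth:
  fixes q :: "'k::field"
  assumes "q \<noteq> 0" "j < 10"
  shows "pairing (diff_tridend_rels q ! j) (\<lambda>t. \<Sum>i<18. c i * (triass_centroid_rels (inverse q) ! i) t) = 0"
proof -
  have qi: "q * inverse q = 1" using assms(1) by simp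
  show ?thesis using assms(2)
    by (simp add: less_Suc_eq eval_nat_numeral; elim disjE;
        simp add: qi pd all_tree2_def all_bops_def diff_tridend_rels_def triass_centroid_rels_def vec_def eps_def)
qed

theorem proposition3p25:
  fixes q :: "'k::field"
  assumes "q \<noteq> 0"
  shows "koszul_dual_rel (lspan (diff_tridend_rels q)) = lspan (triass_centroid_rels (inverse q))"
proof (rule set_eqI, rule iffI)
  fix w assume "w \<in> koszul_dual_rel (lspan (diff_tridend_rels q))"
  then have H: "\<And>j. j < 10 \<Longrightarrow> pairing (diff_tridend_rels q ! j) w = 0"
  proof -
    fix j :: nat assume "j < 10"
    then have "diff_tridend_rels q ! j \<in> lspan (diff_tridend_rels q)"
      by (intro mem_lspan) (simp add: len)
    then show "pairing (diff_tridend_rels q ! j) w = 0"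
      using \<open>w \<in> koszul_dual_rel (lspan (diff_tridend_rels q))\<close> unfolding koszul_dual_rel_def by blast
  qed
  have qi: "q * inverse q = 1" using assms by simp
  have E: "\<And>j. j < 10 \<Longrightarrow> pairing (diff_tridend_rels q ! j) w = 0" by (rule H)
  have E0: "w (C1 Prec Prec) = - w (C2 Prec Prec) - w (C2 Prec Succ) - q * w (C2 Prec Bul)"
    using E[of 0] by (simp add: pd all_tree2_def all_bops_def diff_tridend_rels_def vec_def eps_def algebra_simps eq_neg_iff_add_eq_0 diff_eq_eq)
  have E1: "w (C2 Succ Prec) = - w (C1 Prec Succ)"
    using E[of 1] by (simp add: pd all_tree2_def all_bops_def diff_tridend_rels_def vec_def eps_def algebra_simps eq_neg_iff_add_eq_0 diff_eq_eq)
  have E2: "w (C2 Succ Succ) = - w (C1 Succ Prec) - w (C1 Succ Succ) - q * w (C1 Succ Bul)"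
    using E[of 2] by (simp add: pd all_tree2_def all_bops_def diff_tridend_rels_def vec_def eps_def algebra_simps eq_neg_iff_add_eq_0 diff_eq_eq)
  have E3: "w (C2 Succ Bul) = - w (C1 Bul Succ)"
    using E[of 3] by (simp add: pd all_tree2_def all_bops_def diff_tridend_rels_def vec_def eps_def algebra_simps eq_neg_iff_add_eq_0 diff_eq_eq)
  have E4: "w (C2 Bul Succ) = - w (C1 Bul Prec)"
    using E[of 4] by (simp add: pd all_tree2_def all_bops_def diff_tridend_rels_def vec_def eps_def algebra_simps eq_neg_iff_add_eq_0 diff_eq_eq)
  have E5: "w (C2 Bul Prec) = - w (C1 Prec Bul)"
    using E[of 5] by (simp add: pd all_tree2_def all_bops_def diff_tridend_rels_def vec_def eps_def algebra_simps eq_neg_iff_add_eq_0 diff_eq_eq)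
  have E6: "w (C2 Bul Bul) = - w (C1 Bul Bul)"
    using E[of 6] by (simp add: pd all_tree2_def all_bops_def diff_tridend_rels_def vec_def eps_def algebra_simps eq_neg_iff_add_eq_0 diff_eq_eq)
  have E7: "w (DTop Prec) = - w (DL Prec) - w (DR Prec)"
    using E[of 7] by (simp add: pd all_tree2_def all_bops_def diff_tridend_rels_def vec_def eps_def algebra_simps eq_neg_iff_add_eq_0 diff_eq_eq)
  have E8: "w (DTop Succ) = - w (DL Succ) - w (DR Succ)"
    using E[of 8] by (simp add: pd all_tree2_def all_bops_def diff_tridend_rels_def vec_def eps_def algebra_simps eq_neg_iff_add_eq_0 diff_eq_eq)
  have E9: "w (DTop Bul) = - w (DL Bul) - w (DR Bul)"
    using E[of 9] by (simp add: pd all_tree2_def all_bops_def diff_tridend_rels_def vec_def eps_def algebra_simps eq_neg_iff_add_eq_0 diff_eq_eq)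
  define cl where "cl = [- w (C2 Prec Prec), - w (C2 Prec Succ), w (C1 Prec Succ), w (C1 Succ Prec),
     w (C1 Succ Succ), w (C1 Bul Bul), - q * w (C2 Prec Bul), w (C1 Prec Bul), w (C1 Bul Prec),
     w (C1 Bul Succ), q * w (C1 Succ Bul), - w (DL Prec), - w (DL Succ), - w (DL Bul),
     - w (DR Prec), - w (DR Succ), - w (DR Bul), w DD]"
  have "w = (\<lambda>t. \<Sum>i<length (triass_centroid_rels (inverse q)). (cl ! i) * (triass_centroid_rels (inverse q) ! i) t)"
  proof
    fix t show "w t = (\<Sum>i<length (triass_centroid_rels (inverse q)). (cl ! i) * (triass_centroid_rels (inverse q) ! i) t)"
      unfolding len
      apply (cases t)
          apply (rename_tac m n, case_tac m; case_tac n; simp add: eval_nat_numeral cl_def triass_centroid_rels_def all_bops_def vec_def E0 E1 E2 E3 E4 E5 E6 E7 E8 E9 algebra_simps; simp add: mult.assoc[symmetric] assms)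
         apply (rename_tac m n, case_tac m; case_tac n; simp add: eval_nat_numeral cl_def triass_centroid_rels_def all_bops_def vec_def E0 E1 E2 E3 E4 E5 E6 E7 E8 E9 algebra_simps; simp add: mult.assoc[symmetric] assms)
        apply (rename_tac m, case_tac m; simp add: eval_nat_numeral cl_def triass_centroid_rels_def all_bops_def vec_def E0 E1 E2 E3 E4 E5 E6 E7 E8 E9 algebra_simps; simp add: mult.assoc[symmetric] assms)
       apply (rename_tac m, case_tac m; simp add: eval_nat_numeral cl_def triass_centroid_rels_def all_bops_def vec_def E0 E1 E2 E3 E4 E5 E6 E7 E8 E9 algebra_simps; simp add: mult.assoc[symmetric] assms)
      apply (rename_tac m, case_tac m; simp add: eval_nat_numeral cl_def triass_centroid_rels_def all_bops_def vec_def E0 E1 E2 E3 E4 E5 E6 E7 E8 E9 algebra_simps; simp add: mult.assoc[symmetric] assms)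
     apply (simp add: eval_nat_numeral cl_def triass_centroid_rels_def all_bops_def vec_def E0 E1 E2 E3 E4 E5 E6 E7 E8 E9 algebra_simps; simp add: mult.assoc[symmetric] assms)
      done
  qed
  then show "w \<in> lspan (triass_centroid_rels (inverse q))"
    unfolding lspan_def by blast
next
  fix w assume "w \<in> lspan (triass_centroid_rels (inverse q))"
  then obtain c where w: "w = (\<lambda>t. \<Sum>i<18. c i * (triass_centroid_rels (inverse q) ! i) t)"
    unfolding lspan_def len by blast
  show "w \<in> koszul_dual_rel (lspan (diff_tridend_rels q))"
    unfolding koszul_dual_rel_def lspan_def len
  proof (safe)
    fix d
    show "pairing (\<lambda>t. \<Sum>i<10. d i * (diff_tridend_rels q ! i) t) w = 0"
      unfolding pairing_lin w using orth[OF assms] by simp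
  qed
qed

end
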